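(* Let $k_0\ge 0$ and $c_0\in L^1([-\tau,0);\mathbb{R}_+)$. Let $c^m\in L^1_{loc}([0,\infty);\mathbb{R}_+)$ be the unique solution of $$c^m(t)=\varepsilon\int_{t-\tau}^{t}\widetilde{c}^{\,m}(u)\,e^{\eta(u-t)}\,du,\qquad t\ge 0,$$ where $\widetilde c^{\,m}$ is the concatenation of $c_0$ and $c^m$. Then every control $c\in L^1_{loc}([0,\infty);\mathbb{R}_+)$ satisfying the habit constraint $c(t)\ge h(t)$ for almost every $t\ge0$ satisfies $c(t)\ge c^m(t)$ for almost every $t\ge 0$, and its associated capital path satisfies, for every $t\ge 0$, $$k(t)\le k^M(t):=e^{(A-\delta)t}\Big[k_0-\int_0^t c^m(u)e^{-(A-\delta)u}\,du\Big].$$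
   Context: Fixed parameters: $A>0$, $\delta>0$, $\rho>0$, $\gamma>0$ with $\gamma\ne1$, $\varepsilon>0$ (habit intensity), $\eta>0$ (habit persistence), $\tau>0$ (memory). Given an initial past consumption $c_0\in L^1([-\tau,0);\mathbb{R}_+)$ and a control $c\in L^1_{loc}([0,\infty);\mathbb{R}_+)$, the concatenation is $\widetilde c(s)=c_0(s)$ for $s\in[-\tau,0)$ and $\widetilde c(s)=c(s)$ for $s\ge0$. The (internal) habit is $h(t)=\varepsilon\int_{t-\tau}^{t}\widetilde c(u)e^{\eta(u-t)}du$ for $t\ge0$. Given $k_0$, the capital path associated to $c$ is the solution of $\dot k(t)=(A-\delta)k(t)-c(t)$, $k(0)=k_0$, i.e. $k(t)=k_0e^{(A-\delta)t}-\int_0^te^{(A-\delta)(t-u)}c(u)\,du$. *)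

theory Defs
  imports "HOL-Analysis.Analysis"
begin

definition concat_cons :: "(real \<Rightarrow> real) \<Rightarrow> (real \<Rightarrow> real) \<Rightarrow> real \<Rightarrow> real" where
  "concat_cons c0 c s = (if s < 0 then c0 s else c s)"

definition habit :: "real \<Rightarrow> real \<Rightarrow> real \<Rightarrow> (real \<Rightarrow> real) \<Rightarrow> (real \<Rightarrow> real) \<Rightarrow> real \<Rightarrow> real" where
  "habit \<epsilon> \<eta> \<tau> c0 c t =
     \<epsilon> * (LINT u:{t - \<tau>..t}|lborel. concat_cons c0 c u * exp (\<eta> * (u - t)))"

definition capital :: "real \<Rightarrow> real \<Rightarrow> real \<Rightarrow> (real \<Rightarrow> real) \<Rightarrow> real \<Rightarrow> real" where
  "capital A \<delta> k0 c t =
     k0 * exp ((A - \<delta>) * t) - (LINT u:{0..t}|lborel. exp ((A - \<delta>) * (t - u)) * c u)"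

definition L1loc_nonneg :: "(real \<Rightarrow> real) \<Rightarrow> bool" where
  "L1loc_nonneg c \<longleftrightarrow> (\<forall>T\<ge>0. set_integrable lborel {0..T} c)
                       \<and> (AE t in lborel. t \<ge> 0 \<longrightarrow> c t \<ge> 0)"

end

theory Submission
  imports Defs
begin

lemma si_mult_boundedB:
  fixes f g :: "real \<Rightarrow> real"
  assumes "set_integrable lborel S f" "S \<in> sets lborel" "g \<in> borel_measurable lborel"
    "\<And>x. x \<in> S \<Longrightarrow> \<bar>g x\<bar> \<le> B" "B \<ge> 0"
  shows "set_integrable lborel S (\<lambda>x. f x * g x)"
proof -
  have i: "integrable lborel (\<lambda>x. indicator S x * f x)" using assms(1) by (simp add: set_integrable_def)
  have iB: "integrable lborel (\<lambda>x. B * (indicator S x * f x))" using i by simp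
  have m: "(\<lambda>x. indicator S x * f x) \<in> borel_measurable lborel" using i by auto
  have m2: "(\<lambda>x. (indicator S x * f x) * g x) \<in> borel_measurable lborel" using m assms(3) by measurable
  show ?thesis unfolding set_integrable_def
  proof (rule Bochner_Integration.integrable_bound[OF iB])
    show "(\<lambda>x. indicator S x *\<^sub>R (f x * g x)) \<in> borel_measurable lborel"
      using m2 by (simp add: mult.assoc)
    show "AE x in lborel. norm (indicator S x *\<^sub>R (f x * g x)) \<le> norm (B * (indicator S x * f x))"
    proof (rule AE_I2)
      fix x show "norm (indicator S x *\<^sub>R (f x * g x)) \<le> norm (B * (indicator S x * f x))"
      proof (cases "x \<in> S")
        case True
        then have "\<bar>g x\<bar> \<le> B" by (rule assms(4))
        then have "\<bar>f x\<bar> * \<bar>g x\<bar> \<le> \<bar>f x\<bar> * B" by (simp add: mult_left_mono)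
        then show ?thesis using True assms(5) by (simp add: abs_mult mult.commute)
      qed simp
    qed
  qed
qed

lemma si_mult_bounded:
  fixes f g :: "real \<Rightarrow> real"
  assumes "set_integrable lborel S f" "S \<in> sets lborel" "g \<in> borel_measurable lborel"
    "\<And>x. x \<in> S \<Longrightarrow> \<bar>g x\<bar> \<le> 1"
  shows "set_integrable lborel S (\<lambda>x. f x * g x)"
  using si_mult_boundedB[OF assms] by simp

lemma concat_int:
  fixes c0 c :: "real \<Rightarrow> real"
  assumes "t \<ge> 0" "set_integrable lborel {-\<tau>..<0} c0" "set_integrable lborel {0..t} c"
  shows "set_integrable lborel {t-\<tau>..t} (concat_cons c0 c)"
proof -
  have a: "set_integrable lborel ({t-\<tau>..t} \<inter> {..<0}) c0"
    by (rule set_integrable_subset[OF assms(2)]) (use assms(1) in auto)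
  have b: "set_integrable lborel ({t-\<tau>..t} \<inter> {0..}) c"
    by (rule set_integrable_subset[OF assms(3)]) auto
  have "integrable lborel (\<lambda>x. indicator ({t-\<tau>..t} \<inter> {..<0}) x * c0 x + indicator ({t-\<tau>..t} \<inter> {0..}) x * c x)"
    using a b by (simp add: set_integrable_def)
  moreover have "(\<lambda>x. indicator ({t-\<tau>..t} \<inter> {..<0}) x * c0 x + indicator ({t-\<tau>..t} \<inter> {0..}) x * c x)
     = (\<lambda>x. indicator {t-\<tau>..t} x *\<^sub>R concat_cons c0 c x)"
    by (auto simp: concat_cons_def indicator_def)
  ultimately show ?thesis unfolding set_integrable_def by simp
qed

lemma g_int:
  fixes c cm :: "real \<Rightarrow> real"
  assumes "set_integrable lborel S c" "set_integrable lborel S cm"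
  shows "set_integrable lborel S (\<lambda>u. max 0 (cm u - c u))"
proof -
  have "integrable lborel (\<lambda>x. max (0::real) (indicator S x * cm x - indicator S x * c x))"
    using assms by (intro integrable_max integrable_diff) (auto simp: set_integrable_def)
  moreover have "(\<lambda>x. max (0::real) (indicator S x * cm x - indicator S x * c x))
     = (\<lambda>x. indicator S x *\<^sub>R max 0 (cm x - c x))"
    by (auto simp: indicator_def)
  ultimately show ?thesis unfolding set_integrable_def by simp
qed

lemma habit_int:
  fixes c0 c :: "real \<Rightarrow> real"
  assumes "t \<ge> 0" "\<eta> > 0" "set_integrable lborel {-\<tau>..<0} c0" "set_integrable lborel {0..t} c"
  shows "integrable lborel (\<lambda>u. indicator {t-\<tau>..t} u * (concat_cons c0 c u * exp (\<eta> * (u - t))))"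
proof -
  have "set_integrable lborel {t-\<tau>..t} (\<lambda>u. concat_cons c0 c u * exp (\<eta> * (u - t)))"
  proof (rule si_mult_bounded[OF concat_int[OF assms(1,3,4)]])
    fix x assume "x \<in> {t-\<tau>..t}"
    then have "\<eta> * (x - t) \<le> 0" using assms(2) by (simp add: mult_nonneg_nonpos)
    then show "\<bar>exp (\<eta> * (x - t))\<bar> \<le> 1" by simp
  qed auto
  then show ?thesis by (simp add: set_integrable_def)
qed

lemma habit_diff:
  fixes c0 c cm :: "real \<Rightarrow> real"
  assumes "t \<ge> 0" "\<eta> > 0" "\<epsilon> > 0" "set_integrable lborel {-\<tau>..<0} c0"
    "set_integrable lborel {0..t} c" "set_integrable lborel {0..t} cm"
  shows "habit \<epsilon> \<eta> \<tau> c0 cm t - habit \<epsilon> \<eta> \<tau> c0 c t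
     \<le> \<epsilon> * (LINT u:{0..t}|lborel. max 0 (cm u - c u))"
proof -
  let ?F = "\<lambda>c u. indicator {t-\<tau>..t} u * (concat_cons c0 c u * exp (\<eta> * (u - t)))"
  have i1: "integrable lborel (?F cm)" by (rule habit_int[OF assms(1,2,4,6)])
  have i2: "integrable lborel (?F c)" by (rule habit_int[OF assms(1,2,4,5)])
  have i3: "integrable lborel (\<lambda>u. indicator {0..t} u * max 0 (cm u - c u))"
    using g_int[OF assms(5,6)] by (simp add: set_integrable_def)
  have eq: "habit \<epsilon> \<eta> \<tau> c0 cm t - habit \<epsilon> \<eta> \<tau> c0 c t = \<epsilon> * (integral\<^sup>L lborel (?F cm) - integral\<^sup>L lborel (?F c))"
    by (simp add: habit_def set_lebesgue_integral_def right_diff_distrib)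
  have eq2: "integral\<^sup>L lborel (?F cm) - integral\<^sup>L lborel (?F c) = integral\<^sup>L lborel (\<lambda>u. ?F cm u - ?F c u)"
    using i1 i2 by simp
  have le: "integral\<^sup>L lborel (\<lambda>u. ?F cm u - ?F c u) \<le> integral\<^sup>L lborel (\<lambda>u. indicator {0..t} u * max 0 (cm u - c u))"
  proof (rule integral_mono)
    show "integrable lborel (\<lambda>u. ?F cm u - ?F c u)" using i1 i2 by simp
    show "integrable lborel (\<lambda>u. indicator {0..t} u * max 0 (cm u - c u))" by (rule i3)
    fix u
    show "?F cm u - ?F c u \<le> indicator {0..t} u * max 0 (cm u - c u)"
    proof (cases "u < 0 \<or> u \<notin> {t-\<tau>..t}")
      case True
      then show ?thesis by (auto simp: concat_cons_def indicator_def)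
    next
      case False
      then have u: "0 \<le> u" "u \<le> t" "u \<in> {t-\<tau>..t}" by auto
      have e: "exp (\<eta> * (u - t)) \<le> 1" "exp (\<eta> * (u - t)) > 0"
        using u assms(2) by (auto simp: mult_nonneg_nonpos)
      have "?F cm u - ?F c u = (cm u - c u) * exp (\<eta> * (u - t))"
        using u by (simp add: concat_cons_def indicator_def algebra_simps)
      also have "\<dots> \<le> max 0 (cm u - c u) * exp (\<eta> * (u - t))"
        using e by (intro mult_right_mono) auto
      also have "\<dots> \<le> max 0 (cm u - c u)"
        using e by (intro mult_left_le) auto
      finally show ?thesis using u by (simp add: indicator_def)
    qed
  qed
  show ?thesis unfolding eq eq2 using le assms(3)
    by (simp add: set_lebesgue_integral_def mult_left_mono)
qed

lemma exp_split: "exp ((a::real) * (t - u)) = exp (- a * u) * exp (a * t)"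
proof -
  have "a * (t - u) = - a * u + a * t" by (simp add: algebra_simps)
  then show ?thesis by (simp only: exp_add)
qed

lemma capital_le:
  fixes c cm :: "real \<Rightarrow> real"
  assumes "t \<ge> 0" "set_integrable lborel {0..t} c" "set_integrable lborel {0..t} cm"
    "AE u in lborel. u \<ge> 0 \<longrightarrow> c u \<ge> cm u"
  shows "capital A \<delta> k0 c t
     \<le> exp ((A - \<delta>) * t) * (k0 - (LINT u:{0..t}|lborel. cm u * exp (- (A - \<delta>) * u)))"
proof -
  define a where "a = A - \<delta>"
  have bnd: "\<bar>exp (a * (t - u))\<bar> \<le> exp (\<bar>a\<bar> * t)" if "u \<in> {0..t}" for u
  proof -
    have "a * (t - u) \<le> \<bar>a\<bar> * (t - u)" using that by (intro mult_right_mono) auto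
    also have "\<dots> \<le> \<bar>a\<bar> * t" using that by (intro mult_left_mono) auto
    finally show ?thesis by simp
  qed
  have i1: "set_integrable lborel {0..t} (\<lambda>u. c u * exp (a * (t - u)))"
    by (rule si_mult_boundedB[OF assms(2) _ _ bnd]) auto
  have i2: "set_integrable lborel {0..t} (\<lambda>u. cm u * exp (a * (t - u)))"
    by (rule si_mult_boundedB[OF assms(3) _ _ bnd]) auto
  have j1: "integrable lborel (\<lambda>u. indicator {0..t} u * (exp (a * (t - u)) * c u))"
    using i1 by (simp add: set_integrable_def mult.commute)
  have j2: "integrable lborel (\<lambda>u. indicator {0..t} u * (exp (a * (t - u)) * cm u))"
    using i2 by (simp add: set_integrable_def mult.commute)
  have mono: "integral\<^sup>L lborel (\<lambda>u. indicator {0..t} u * (exp (a * (t - u)) * cm u))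
      \<le> integral\<^sup>L lborel (\<lambda>u. indicator {0..t} u * (exp (a * (t - u)) * c u))"
  proof (rule integral_mono_AE[OF j2 j1])
    show "AE u in lborel. indicator {0..t} u * (exp (a * (t - u)) * cm u)
        \<le> indicator {0..t} u * (exp (a * (t - u)) * c u)"
      using assms(4) by eventually_elim (auto simp: indicator_def)
  qed
  have eq: "exp (a * t) * (LINT u:{0..t}|lborel. cm u * exp (- a * u))
      = integral\<^sup>L lborel (\<lambda>u. indicator {0..t} u * (exp (a * (t - u)) * cm u))"
  proof -
    have "exp (a * t) * (LINT u:{0..t}|lborel. cm u * exp (- a * u))
       = integral\<^sup>L lborel (\<lambda>u. indicator {0..t} u * (cm u * exp (- a * u)) * exp (a * t))"
      by (simp add: set_lebesgue_integral_def mult.commute)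
    also have "\<dots> = integral\<^sup>L lborel (\<lambda>u. indicator {0..t} u * (exp (a * (t - u)) * cm u))"
      by (rule Bochner_Integration.integral_cong) (auto simp: exp_split)
    finally show ?thesis .
  qed
  have "capital A \<delta> k0 c t = k0 * exp (a * t) - integral\<^sup>L lborel (\<lambda>u. indicator {0..t} u * (exp (a * (t - u)) * c u))"
    by (simp add: capital_def a_def set_lebesgue_integral_def)
  also have "\<dots> \<le> k0 * exp (a * t) - integral\<^sup>L lborel (\<lambda>u. indicator {0..t} u * (exp (a * (t - u)) * cm u))"
    using mono by simp
  also have "\<dots> = exp (a * t) * (k0 - (LINT u:{0..t}|lborel. cm u * exp (- a * u)))"
    using eq by (simp add: right_diff_distrib mult.commute)
  finally show ?thesis by (simp add: a_def)
qed

lemma lint_mono_set: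
  fixes g :: "real \<Rightarrow> real"
  assumes "0 \<le> s" "s \<le> T" "set_integrable lborel {0..T} g" "\<And>t. g t \<ge> 0"
  shows "(LINT u:{0..s}|lborel. g u) \<le> (LINT u:{0..T}|lborel. g u)"
proof -
  have i2: "integrable lborel (\<lambda>u. indicator {0..T} u * g u)" using assms(3) by (simp add: set_integrable_def)
  have "set_integrable lborel {0..s} g" by (rule set_integrable_subset[OF assms(3)]) (use assms in auto)
  then have i1: "integrable lborel (\<lambda>u. indicator {0..s} u * g u)" by (simp add: set_integrable_def)
  have "integral\<^sup>L lborel (\<lambda>u. indicator {0..s} u * g u) \<le> integral\<^sup>L lborel (\<lambda>u. indicator {0..T} u * g u)"
    by (rule integral_mono[OF i1 i2]) (use assms in \<open>auto simp: indicator_def\<close>)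
  then show ?thesis by (simp add: set_lebesgue_integral_def)
qed

lemma gron:
  fixes g :: "real \<Rightarrow> real" and \<epsilon> :: real
  assumes ep: "\<epsilon> > 0" and ig: "\<And>T. T \<ge> 0 \<Longrightarrow> set_integrable lborel {0..T} g"
    and gnn: "\<And>t. g t \<ge> 0"
    and F: "AE t in lborel. t \<ge> 0 \<longrightarrow> g t \<le> \<epsilon> * (LINT u:{0..t}|lborel. g u)"
  shows "AE t in lborel. t \<ge> 0 \<longrightarrow> g t = 0"
proof -
  define h where "h = 1 / (2 * \<epsilon>)"
  have hpos: "h > 0" using ep by (simp add: h_def)
  have eh: "\<epsilon> * h = 1/2" using ep by (simp add: h_def)
  have Q: "AE t in lborel. 0 \<le> t \<and> t \<le> real n * h \<longrightarrow> g t = 0" for n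
  proof (induction n)
    case 0
    show ?case using AE_lborel_singleton[of "0::real"] by eventually_elim auto
  next
    case (Suc n)
    define T where "T = real (Suc n) * h"
    have T0: "T \<ge> 0" using hpos by (simp add: T_def)
    have nT: "real n * h \<le> T" using hpos by (simp add: T_def)
    have Th: "T - real n * h = h" by (simp add: T_def algebra_simps)
    define M where "M = (LINT u:{0..T}|lborel. g u)"
    have iT: "integrable lborel (\<lambda>u. indicator {0..T} u * g u)"
      using ig[OF T0] by (simp add: set_integrable_def)
    have M0: "M \<ge> 0" unfolding M_def set_lebesgue_integral_def
      by (rule integral_nonneg_AE) (auto simp: gnn)
    have bnd: "AE t in lborel. indicator {0..T} t * g t \<le> \<epsilon> * M * indicator {real n * h<..T} t"
      using F Suc.IH
    proof eventually_elim
      case (elim t)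
      show ?case
      proof (cases "0 \<le> t \<and> t \<le> T")
        case False then show ?thesis using M0 ep by (auto simp: indicator_def)
      next
        case True
        show ?thesis
        proof (cases "t \<le> real n * h")
          case True2: True
          then show ?thesis using True elim(2) M0 ep by (auto simp: indicator_def)
        next
          case False
          have "g t \<le> \<epsilon> * (LINT u:{0..t}|lborel. g u)" using elim(1) True by auto
          also have "\<dots> \<le> \<epsilon> * M" unfolding M_def
            using lint_mono_set[of t T g] True ig[OF T0] gnn ep by (intro mult_left_mono) auto
          finally show ?thesis using True False by (auto simp: indicator_def)
        qed
      qed
    qed
    have iI: "integrable lborel (indicator {real n * h<..T} :: real \<Rightarrow> real)"
      using nT by (simp add: integrable_indicator_iff emeasure_lborel_Ioc)
    have Meq: "M = integral\<^sup>L lborel (\<lambda>u. indicator {0..T} u * g u)"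
      by (simp add: M_def set_lebesgue_integral_def)
    have "integral\<^sup>L lborel (\<lambda>u. indicator {0..T} u * g u) \<le> integral\<^sup>L lborel (\<lambda>t. \<epsilon> * M * indicator {real n * h<..T} t)"
      by (rule integral_mono_AE[OF _ _ bnd]) (use iT iI in auto)
    then have "M \<le> integral\<^sup>L lborel (\<lambda>t. \<epsilon> * M * indicator {real n * h<..T} t)"
      using Meq by simp
    also have "\<dots> = \<epsilon> * M * h" using nT Th by simp
    also have "\<dots> = M / 2" using eh by (simp add: algebra_simps)
    finally have "M = 0" using M0 by simp
    then have "AE t in lborel. indicator {0..T} t * g t = 0"
      unfolding Meq
      using integral_nonneg_eq_0_iff_AE[OF iT] gnn by simp
    then show ?case
      by eventually_elim (auto simp: T_def indicator_def split: if_splits)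
  qed
  have "AE t in lborel. \<forall>n. 0 \<le> t \<and> t \<le> real n * h \<longrightarrow> g t = 0"
    using Q by (subst AE_all_countable) blast
  then show ?thesis
  proof eventually_elim
    case (elim t)
    show ?case
    proof
      assume t0: "t \<ge> 0"
      obtain n where "t / h \<le> real n" using real_arch_simple by blast
      then have "t \<le> real n * h" using hpos by (simp add: divide_le_eq)
      then show "g t = 0" using elim t0 by blast
    qed
  qed
qed

theorem mainTheorem1:
  fixes A \<delta> \<epsilon> \<eta> \<tau> k0 :: real
    and c0 cm :: "real \<Rightarrow> real"
  assumes "A > 0" and "\<delta> > 0" and "\<epsilon> > 0" and "\<eta> > 0" and "\<tau> > 0"
    and "k0 \<ge> 0"
    and "set_integrable lborel {-\<tau>..<0} c0"
    and "AE s in lborel. s \<in> {-\<tau>..<0} \<longrightarrow> c0 s \<ge> 0"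
    and "L1loc_nonneg cm"
    and "AE t in lborel. t \<ge> 0 \<longrightarrow> cm t = habit \<epsilon> \<eta> \<tau> c0 cm t"
  shows "\<forall>c. L1loc_nonneg c \<and> (AE t in lborel. t \<ge> 0 \<longrightarrow> c t \<ge> habit \<epsilon> \<eta> \<tau> c0 c t) \<longrightarrow>
           (AE t in lborel. t \<ge> 0 \<longrightarrow> c t \<ge> cm t)
         \<and> (\<forall>t\<ge>0. capital A \<delta> k0 c t
                 \<le> exp ((A - \<delta>) * t) * (k0 - (LINT u:{0..t}|lborel. cm u * exp (- (A - \<delta>) * u))))"
proof (intro allI impI)
  fix c :: "real \<Rightarrow> real"
  assume H: "L1loc_nonneg c \<and> (AE t in lborel. t \<ge> 0 \<longrightarrow> c t \<ge> habit \<epsilon> \<eta> \<tau> c0 c t)"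
  have ic: "\<And>T. T \<ge> 0 \<Longrightarrow> set_integrable lborel {0..T} c" using H by (simp add: L1loc_nonneg_def)
  have icm: "\<And>T. T \<ge> 0 \<Longrightarrow> set_integrable lborel {0..T} cm" using assms(9) by (simp add: L1loc_nonneg_def)
  define g where "g u = max 0 (cm u - c u)" for u
  have ig: "\<And>T. T \<ge> 0 \<Longrightarrow> set_integrable lborel {0..T} g"
    unfolding g_def by (rule g_int[OF ic icm])
  have gnn: "\<And>t. g t \<ge> 0" by (simp add: g_def)
  have F: "AE t in lborel. t \<ge> 0 \<longrightarrow> g t \<le> \<epsilon> * (LINT u:{0..t}|lborel. g u)"
    using conjunct2[OF H] assms(10)
  proof eventually_elim
    case (elim t)
    show ?case
    proof
      assume t0: "t \<ge> 0"
      have d: "habit \<epsilon> \<eta> \<tau> c0 cm t - habit \<epsilon> \<eta> \<tau> c0 c t \<le> \<epsilon> * (LINT u:{0..t}|lborel. g u)"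
        unfolding g_def by (rule habit_diff[OF t0 assms(4,3,7) ic[OF t0] icm[OF t0]])
      have "(LINT u:{0..t}|lborel. g u) \<ge> 0" unfolding set_lebesgue_integral_def
        by (rule integral_nonneg_AE) (auto simp: gnn)
      then have "\<epsilon> * (LINT u:{0..t}|lborel. g u) \<ge> 0" using assms(3) by simp
      then show "g t \<le> \<epsilon> * (LINT u:{0..t}|lborel. g u)"
        using d elim t0 by (auto simp: g_def)
    qed
  qed
  have G: "AE t in lborel. t \<ge> 0 \<longrightarrow> g t = 0" by (rule gron[OF assms(3) ig gnn F])
  have P1: "AE t in lborel. t \<ge> 0 \<longrightarrow> c t \<ge> cm t"
    using G by eventually_elim (auto simp: g_def)
  show "(AE t in lborel. t \<ge> 0 \<longrightarrow> c t \<ge> cm t)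
         \<and> (\<forall>t\<ge>0. capital A \<delta> k0 c t
                 \<le> exp ((A - \<delta>) * t) * (k0 - (LINT u:{0..t}|lborel. cm u * exp (- (A - \<delta>) * u))))"
  proof (intro conjI allI impI)
    show "AE t in lborel. t \<ge> 0 \<longrightarrow> c t \<ge> cm t" by (rule P1)
    fix t :: real assume t0: "t \<ge> 0"
    show "capital A \<delta> k0 c t \<le> exp ((A - \<delta>) * t) * (k0 - (LINT u:{0..t}|lborel. cm u * exp (- (A - \<delta>) * u)))"
      by (rule capital_le[OF t0 ic[OF t0] icm[OF t0] P1])
  qed
qed

end
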